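(* Let $X$ be a topological space, $\mathcal{D}$ the set of dense open subsets of $X$, and $\mathcal{D}'$ an admissible set of domains on $X$ with $\mathcal{D}'\subseteq\mathcal{D}$. Then the inclusion $\bigcup_{A\in\mathcal{D}'}\mathscr{C}(A)\to\bigcup_{A\in\mathcal{D}}\mathscr{C}(A)$, $f\mapsto f$, descends to a well-defined positive ring morphism $\check\iota\colon\mathscr{C}_\approx(\mathcal{D}')\to\mathscr{C}_\approx(\mathcal{D})=\mathscr{C}_{\mathrm{a.e.}}(X)$, and $\check\iota$ is an order embedding.
   Context: An admissible set of domains on $X$ is a set $\mathcal{E}$ of open subsets of $X$ with $X\in\mathcal{E}$ and $A\cap B\in\mathcal{E}$ for all $A,B\in\mathcal{E}$ (the dense open subsets form one). For such $\mathcal{E}$: on $\bigcup_{A\in\mathcal{E}}\mathscr{C}(A)$ ($\mathscr{C}(A)$ = continuous real functions on $A$) define $f+g$, $fg$ pointwise on $\operatorname{dom}f\cap\operatorname{dom}g$; $f\approx g$ iff $f|_A=g|_A$ for some $A\in\mathcal{E}$, $A\subseteq\operatorname{dom}f\cap\operatorname{dom}g$; $\mathscr{C}_\approx(\mathcal{E})$ is the quotient commutative ring, partially ordered by $[f]\le[g]$ iff $f|_A\le g|_A$ pointwise for some $A\in\mathcal{E}$, $A\subseteq\operatorname{dom}f\cap\operatorname{dom}g$. $\mathscr{C}_{\mathrm{a.e.}}(X)=\mathscr{C}_\approx(\mathcal{D})$ for $\mathcal{D}$ the dense open subsets. A ring morphism $\Phi\colon R\to S$ of partially ordered rings is positive if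 $\Phi(R^+)\subseteq S^+$, an order embedding if in addition $\Phi^{-1}(S^+)\subseteq R^+$. *)

theory Defs
  imports "HOL-Analysis.Analysis" "HOL-Algebra.Ring" "HOL-Algebra.RingHom"
begin

text \<open>A partial continuous real function on X is represented as a pair (A, f) with A its domain
  and f continuous on A (as a subspace of X); f is taken extensional (undefined outside A).\<close>

type_synonym 'a pfun = "'a set \<times> ('a \<Rightarrow> real)"

definition admissible_domains :: "'a topology \<Rightarrow> 'a set set \<Rightarrow> bool" where
  "admissible_domains X E \<longleftrightarrow> (\<forall>A\<in>E. openin X A) \<and> topspace X \<in> E \<and>
     (\<forall>A\<in>E. \<forall>B\<in>E. A \<inter> B \<in> E)"

definition dense_opens :: "'a topology \<Rightarrow> 'a set set" where
  "dense_opens X = {A. openin X A \<and> X closure_of A = topspace X}"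

definition pfuns :: "'a topology \<Rightarrow> 'a set set \<Rightarrow> 'a pfun set" where
  "pfuns X E = {(A, f). A \<in> E \<and> continuous_map (subtopology X A) euclideanreal f \<and> f \<in> extensional A}"

definition padd :: "'a pfun \<Rightarrow> 'a pfun \<Rightarrow> 'a pfun" where
  "padd p q = (fst p \<inter> fst q, restrict (\<lambda>x. snd p x + snd q x) (fst p \<inter> fst q))"

definition pmult :: "'a pfun \<Rightarrow> 'a pfun \<Rightarrow> 'a pfun" where
  "pmult p q = (fst p \<inter> fst q, restrict (\<lambda>x. snd p x * snd q x) (fst p \<inter> fst q))"

definition pconst :: "'a topology \<Rightarrow> real \<Rightarrow> 'a pfun" where
  "pconst X c = (topspace X, restrict (\<lambda>x. c) (topspace X))"

definition paeq :: "'a set set \<Rightarrow> 'a pfun \<Rightarrow> 'a pfun \<Rightarrow> bool" where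
  "paeq E p q \<longleftrightarrow> (\<exists>C\<in>E. C \<subseteq> fst p \<inter> fst q \<and> (\<forall>x\<in>C. snd p x = snd q x))"

definition ple :: "'a set set \<Rightarrow> 'a pfun \<Rightarrow> 'a pfun \<Rightarrow> bool" where
  "ple E p q \<longleftrightarrow> (\<exists>C\<in>E. C \<subseteq> fst p \<inter> fst q \<and> (\<forall>x\<in>C. snd p x \<le> snd q x))"

definition paeq_rel :: "'a topology \<Rightarrow> 'a set set \<Rightarrow> ('a pfun \<times> 'a pfun) set" where
  "paeq_rel X E = {(p, q). p \<in> pfuns X E \<and> q \<in> pfuns X E \<and> paeq E p q}"

definition pclass :: "'a topology \<Rightarrow> 'a set set \<Rightarrow> 'a pfun \<Rightarrow> 'a pfun set" where
  "pclass X E p = paeq_rel X E `` {p}"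

definition cadd :: "'a topology \<Rightarrow> 'a set set \<Rightarrow> 'a pfun set \<Rightarrow> 'a pfun set \<Rightarrow> 'a pfun set" where
  "cadd X E P Q = pclass X E (padd (SOME p. p \<in> P) (SOME q. q \<in> Q))"

definition cmult :: "'a topology \<Rightarrow> 'a set set \<Rightarrow> 'a pfun set \<Rightarrow> 'a pfun set \<Rightarrow> 'a pfun set" where
  "cmult X E P Q = pclass X E (pmult (SOME p. p \<in> P) (SOME q. q \<in> Q))"

definition Capprox :: "'a topology \<Rightarrow> 'a set set \<Rightarrow> 'a pfun set ring" where
  "Capprox X E = \<lparr>carrier = pfuns X E // paeq_rel X E,
                   monoid.mult = cmult X E,
                   one = pclass X E (pconst X 1),
                   zero = pclass X E (pconst X 0),
                   add = cadd X E\<rparr>"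

definition cle :: "'a topology \<Rightarrow> 'a set set \<Rightarrow> 'a pfun set \<Rightarrow> 'a pfun set \<Rightarrow> bool" where
  "cle X E P Q \<longleftrightarrow> (\<exists>p\<in>P. \<exists>q\<in>Q. ple E p q)"

definition cpos :: "'a topology \<Rightarrow> 'a set set \<Rightarrow> 'a pfun set set" where
  "cpos X E = {P \<in> carrier (Capprox X E). cle X E (pclass X E (pconst X 0)) P}"

definition iota_check :: "'a topology \<Rightarrow> 'a set set \<Rightarrow> 'a pfun set \<Rightarrow> 'a pfun set" where
  "iota_check X D P = paeq_rel X D `` P"

end

theory Submission
  imports Defs
begin

lemma dense_Int:
  assumes "A \<in> dense_opens X" "B \<in> dense_opens X"
  shows "A \<inter> B \<in> dense_opens X"
proof -
  have oA: "openin X A" and oB: "openin X B"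
    and dA: "X closure_of A = topspace X" and dB: "X closure_of B = topspace X"
    using assms by (auto simp: dense_opens_def)
  have "X closure_of (A \<inter> B) = topspace X"
  proof
    show "X closure_of (A \<inter> B) \<subseteq> topspace X" by (rule closure_of_subset_topspace)
    show "topspace X \<subseteq> X closure_of (A \<inter> B)"
    proof
      fix x assume x: "x \<in> topspace X"
      show "x \<in> X closure_of (A \<inter> B)"
        unfolding in_closure_of
      proof (intro conjI allI impI)
        show "x \<in> topspace X" by fact
        fix T assume T: "x \<in> T \<and> openin X T"
        have "x \<in> X closure_of A" using x dA by simp
        then obtain y where y: "y \<in> A" "y \<in> T" using T unfolding in_closure_of by blast
        have oAT: "openin X (A \<inter> T)" using oA T by auto
        have "y \<in> topspace X" using y openin_subset[OF oA] by blast
        then have "y \<in> X closure_of B" using dB by simp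
        then obtain z where "z \<in> B" "z \<in> A \<inter> T"
          using y oAT unfolding in_closure_of by blast
        then show "\<exists>y. y \<in> A \<inter> B \<and> y \<in> T" by blast
      qed
    qed
  qed
  then show ?thesis using oA oB by (auto simp: dense_opens_def)
qed

lemma paeq_trans:
  assumes E: "\<forall>A\<in>E. \<forall>B\<in>E. A \<inter> B \<in> E"
    and "paeq E p q" "paeq E q r"
  shows "paeq E p r"
proof -
  obtain C1 where C1: "C1 \<in> E" "C1 \<subseteq> fst p \<inter> fst q" "\<forall>x\<in>C1. snd p x = snd q x"
    using assms(2) by (auto simp: paeq_def)
  obtain C2 where C2: "C2 \<in> E" "C2 \<subseteq> fst q \<inter> fst r" "\<forall>x\<in>C2. snd q x = snd r x"
    using assms(3) by (auto simp: paeq_def)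
  have I: "C1 \<inter> C2 \<in> E" by (rule E[rule_format]) (rule C1(1), rule C2(1))
  have "C1 \<inter> C2 \<subseteq> fst p \<inter> fst r \<and> (\<forall>x\<in>C1 \<inter> C2. snd p x = snd r x)" using C1 C2 by auto
  then show ?thesis using I unfolding paeq_def by blast
qed

lemma paeq_sym:
  assumes "paeq E p q" shows "paeq E q p"
proof -
  obtain C where C: "C \<in> E" "C \<subseteq> fst p \<inter> fst q" "\<forall>x\<in>C. snd p x = snd q x"
    using assms unfolding paeq_def by blast
  have "C \<subseteq> fst q \<inter> fst p" "\<forall>x\<in>C. snd q x = snd p x" using C(2,3) by auto
  then show ?thesis using C(1) unfolding paeq_def by blast
qed

lemma paeq_refl:
  assumes "fst p \<in> E" shows "paeq E p p"
  unfolding paeq_def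
proof (rule bexI[of _ "fst p"])
  show "fst p \<subseteq> fst p \<inter> fst p \<and> (\<forall>x\<in>fst p. snd p x = snd p x)" by simp
qed (rule assms)

lemma paeq_padd:
  assumes E: "\<forall>A\<in>E. \<forall>B\<in>E. A \<inter> B \<in> E"
    and "paeq E p p'" "paeq E q q'"
  shows "paeq E (padd p q) (padd p' q')"
proof -
  obtain C1 where C1: "C1 \<in> E" "C1 \<subseteq> fst p \<inter> fst p'" "\<forall>x\<in>C1. snd p x = snd p' x"
    using assms(2) by (auto simp: paeq_def)
  obtain C2 where C2: "C2 \<in> E" "C2 \<subseteq> fst q \<inter> fst q'" "\<forall>x\<in>C2. snd q x = snd q' x"
    using assms(3) by (auto simp: paeq_def)
  have I: "C1 \<inter> C2 \<in> E" by (rule E[rule_format]) (rule C1(1), rule C2(1))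
  have "C1 \<inter> C2 \<subseteq> fst (padd p q) \<inter> fst (padd p' q') \<and> (\<forall>x\<in>C1 \<inter> C2. snd (padd p q) x = snd (padd p' q') x)"
    using C1 C2 by (auto simp: padd_def)
  then show ?thesis using I unfolding paeq_def by blast
qed

lemma paeq_pmult:
  assumes E: "\<forall>A\<in>E. \<forall>B\<in>E. A \<inter> B \<in> E"
    and "paeq E p p'" "paeq E q q'"
  shows "paeq E (pmult p q) (pmult p' q')"
proof -
  obtain C1 where C1: "C1 \<in> E" "C1 \<subseteq> fst p \<inter> fst p'" "\<forall>x\<in>C1. snd p x = snd p' x"
    using assms(2) by (auto simp: paeq_def)
  obtain C2 where C2: "C2 \<in> E" "C2 \<subseteq> fst q \<inter> fst q'" "\<forall>x\<in>C2. snd q x = snd q' x"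
    using assms(3) by (auto simp: paeq_def)
  have I: "C1 \<inter> C2 \<in> E" by (rule E[rule_format]) (rule C1(1), rule C2(1))
  have "C1 \<inter> C2 \<subseteq> fst (pmult p q) \<inter> fst (pmult p' q') \<and> (\<forall>x\<in>C1 \<inter> C2. snd (pmult p q) x = snd (pmult p' q') x)"
    using C1 C2 by (auto simp: pmult_def)
  then show ?thesis using I unfolding paeq_def by blast
qed

lemma pfuns_padd:
  assumes E: "\<forall>A\<in>E. \<forall>B\<in>E. A \<inter> B \<in> E"
    and "p \<in> pfuns X E" "q \<in> pfuns X E"
  shows "padd p q \<in> pfuns X E" "pmult p q \<in> pfuns X E"
proof -
  obtain A f where p: "p = (A, f)" "A \<in> E" "continuous_map (subtopology X A) euclideanreal f"
    using assms(2) by (auto simp: pfuns_def)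
  obtain B g where q: "q = (B, g)" "B \<in> E" "continuous_map (subtopology X B) euclideanreal g"
    using assms(3) by (auto simp: pfuns_def)
  have cf: "continuous_map (subtopology X (A \<inter> B)) euclideanreal f"
    using p(3) continuous_map_from_subtopology_mono by blast
  have cg: "continuous_map (subtopology X (A \<inter> B)) euclideanreal g"
    using q(3) continuous_map_from_subtopology_mono by blast
  have "continuous_map (subtopology X (A \<inter> B)) euclideanreal (\<lambda>x. f x + g x)"
    using cf cg by (intro continuous_map_add) auto
  then have "continuous_map (subtopology X (A \<inter> B)) euclideanreal (restrict (\<lambda>x. f x + g x) (A \<inter> B))"
    by (rule continuous_map_eq) auto
  then show "padd p q \<in> pfuns X E"
    using p q E by (auto simp: pfuns_def padd_def)
  have "continuous_map (subtopology X (A \<inter> B)) euclideanreal (\<lambda>x. f x * g x)"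
    using cf cg by (intro continuous_map_real_mult) auto
  then have "continuous_map (subtopology X (A \<inter> B)) euclideanreal (restrict (\<lambda>x. f x * g x) (A \<inter> B))"
    by (rule continuous_map_eq) auto
  then show "pmult p q \<in> pfuns X E"
    using p q E by (auto simp: pfuns_def pmult_def)
qed

lemma pconst_in: "topspace X \<in> E \<Longrightarrow> pconst X c \<in> pfuns X E"
  unfolding pfuns_def pconst_def
  by (auto intro: continuous_map_eq[OF continuous_map_const[THEN iffD2]])


lemma pfuns_fst: "p \<in> pfuns X E \<Longrightarrow> fst p \<in> E"
  by (auto simp: pfuns_def)

lemma pclass_mem: "q \<in> pclass X E p \<longleftrightarrow> p \<in> pfuns X E \<and> q \<in> pfuns X E \<and> paeq E p q"
  by (simp add: pclass_def paeq_rel_def)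

lemma pclass_self: "p \<in> pfuns X E \<Longrightarrow> p \<in> pclass X E p"
  by (simp add: pclass_mem paeq_refl pfuns_fst)

lemma pclass_eq:
  assumes E: "\<forall>A\<in>E. \<forall>B\<in>E. A \<inter> B \<in> E"
    and "p \<in> pfuns X E" "q \<in> pfuns X E" "paeq E p q"
  shows "pclass X E p = pclass X E q"
proof
  show "pclass X E p \<subseteq> pclass X E q"
  proof
    fix r assume "r \<in> pclass X E p"
    then have r: "r \<in> pfuns X E" "paeq E p r" by (simp_all add: pclass_mem)
    have "paeq E q r" by (rule paeq_trans[OF E paeq_sym[OF assms(4)] r(2)])
    then show "r \<in> pclass X E q" using r assms(3) by (simp add: pclass_mem)
  qed
  show "pclass X E q \<subseteq> pclass X E p"
  proof
    fix r assume "r \<in> pclass X E q"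
    then have r: "r \<in> pfuns X E" "paeq E q r" by (simp_all add: pclass_mem)
    have "paeq E p r" by (rule paeq_trans[OF E assms(4) r(2)])
    then show "r \<in> pclass X E p" using r assms(2) by (simp add: pclass_mem)
  qed
qed

lemma some_in_class:
  assumes E: "\<forall>A\<in>E. \<forall>B\<in>E. A \<inter> B \<in> E" and p: "p \<in> pfuns X E"
  shows "(SOME p'. p' \<in> pclass X E p) \<in> pfuns X E \<and> paeq E p (SOME p'. p' \<in> pclass X E p)"
proof -
  have "(SOME p'. p' \<in> pclass X E p) \<in> pclass X E p"
    using pclass_self[OF p] by (rule someI)
  from pclass_mem[THEN iffD1, OF this] show ?thesis by blast
qed

lemma cadd_class:
  assumes E: "\<forall>A\<in>E. \<forall>B\<in>E. A \<inter> B \<in> E" and p: "p \<in> pfuns X E" and q: "q \<in> pfuns X E"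
  shows "cadd X E (pclass X E p) (pclass X E q) = pclass X E (padd p q)"
proof -
  obtain p' where p': "p' = (SOME p'. p' \<in> pclass X E p)" by blast
  obtain q' where q': "q' = (SOME q'. q' \<in> pclass X E q)" by blast
  have hp: "p' \<in> pfuns X E" "paeq E p p'" using some_in_class[OF E p] p' by auto
  have hq: "q' \<in> pfuns X E" "paeq E q q'" using some_in_class[OF E q] q' by auto
  have "paeq E (padd p' q') (padd p q)" by (rule paeq_padd[OF E paeq_sym[OF hp(2)] paeq_sym[OF hq(2)]])
  then have "pclass X E (padd p' q') = pclass X E (padd p q)"
    by (rule pclass_eq[OF E pfuns_padd(1)[OF E hp(1) hq(1)] pfuns_padd(1)[OF E p q]])
  then show ?thesis unfolding cadd_def using p' q' by simp
qed

lemma cmult_class: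
  assumes E: "\<forall>A\<in>E. \<forall>B\<in>E. A \<inter> B \<in> E" and p: "p \<in> pfuns X E" and q: "q \<in> pfuns X E"
  shows "cmult X E (pclass X E p) (pclass X E q) = pclass X E (pmult p q)"
proof -
  obtain p' where p': "p' = (SOME p'. p' \<in> pclass X E p)" by blast
  obtain q' where q': "q' = (SOME q'. q' \<in> pclass X E q)" by blast
  have hp: "p' \<in> pfuns X E" "paeq E p p'" using some_in_class[OF E p] p' by auto
  have hq: "q' \<in> pfuns X E" "paeq E q q'" using some_in_class[OF E q] q' by auto
  have "paeq E (pmult p' q') (pmult p q)" by (rule paeq_pmult[OF E paeq_sym[OF hp(2)] paeq_sym[OF hq(2)]])
  then have "pclass X E (pmult p' q') = pclass X E (pmult p q)"
    by (rule pclass_eq[OF E pfuns_padd(2)[OF E hp(1) hq(1)] pfuns_padd(2)[OF E p q]])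
  then show ?thesis unfolding cmult_def using p' q' by simp
qed

lemma carrier_Capprox:
  "P \<in> carrier (Capprox X E) \<longleftrightarrow> (\<exists>p\<in>pfuns X E. P = pclass X E p)"
  by (auto simp: Capprox_def quotient_def pclass_def)


lemma nonneg_on_domain:
  assumes p: "p \<in> pfuns X E" and oA: "openin X (fst p)"
    and C: "C \<in> dense_opens X" "C \<subseteq> fst p" "\<forall>x\<in>C. 0 \<le> snd p x"
  shows "\<forall>x\<in>fst p. 0 \<le> snd p x"
proof
  fix x assume x: "x \<in> fst p"
  show "0 \<le> snd p x"
  proof (rule ccontr)
    assume neg: "\<not> 0 \<le> snd p x"
    have cm: "continuous_map (subtopology X (fst p)) euclideanreal (snd p)"
    proof (cases p)
      case (Pair A f)
      then show ?thesis using p unfolding pfuns_def by simp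
    qed
    let ?V = "{y \<in> topspace (subtopology X (fst p)). snd p y \<in> {..<0}}"
    have "openin (subtopology X (fst p)) ?V"
      by (rule openin_continuous_map_preimage[OF cm]) simp
    then have oV: "openin X ?V" using openin_open_subtopology[OF oA] by blast
    have xt: "x \<in> topspace X" using x openin_subset[OF oA] by blast
    have xV: "x \<in> ?V" using x xt neg by (simp add: topspace_subtopology)
    have "x \<in> X closure_of C" using C(1) xt by (simp add: dense_opens_def)
    then have "\<forall>T. x \<in> T \<and> openin X T \<longrightarrow> (\<exists>y. y \<in> C \<and> y \<in> T)"
      by (simp only: in_closure_of) (rule conjunct2)
    then have "x \<in> ?V \<and> openin X ?V \<longrightarrow> (\<exists>y. y \<in> C \<and> y \<in> ?V)" by (rule spec)
    then have "\<exists>y. y \<in> C \<and> y \<in> ?V" using xV oV by blast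
    then obtain y where y: "y \<in> C" "y \<in> ?V" by (elim exE conjE)
    have "snd p y < 0" using y(2) by simp
    moreover have "0 \<le> snd p y" using C(3) y(1) by (rule bspec)
    ultimately show False by simp
  qed
qed

theorem proposition17:
  fixes X :: "'a topology" and D' :: "'a set set"
  assumes "admissible_domains X D'"
    and "D' \<subseteq> dense_opens X"
  shows "pfuns X D' \<subseteq> pfuns X (dense_opens X)
    \<and> (\<forall>p\<in>pfuns X D'. \<forall>q\<in>pfuns X D'. paeq D' p q \<longrightarrow> paeq (dense_opens X) p q)
    \<and> (\<forall>p\<in>pfuns X D'. iota_check X (dense_opens X) (pclass X D' p) = pclass X (dense_opens X) p)
    \<and> iota_check X (dense_opens X) \<in> ring_hom (Capprox X D') (Capprox X (dense_opens X))
    \<and> iota_check X (dense_opens X) ` cpos X D' \<subseteq> cpos X (dense_opens X)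
    \<and> (\<forall>P\<in>carrier (Capprox X D').
         iota_check X (dense_opens X) P \<in> cpos X (dense_opens X) \<longrightarrow> P \<in> cpos X D')"
proof -
  let ?D = "dense_opens X"
  have oD': "\<forall>A\<in>D'. openin X A" and tD': "topspace X \<in> D'"
    and iD': "\<forall>A\<in>D'. \<forall>B\<in>D'. A \<inter> B \<in> D'"
    using assms(1) by (auto simp: admissible_domains_def)
  have iD: "\<forall>A\<in>?D. \<forall>B\<in>?D. A \<inter> B \<in> ?D" using dense_Int by blast
  have s1: "pfuns X D' \<subseteq> pfuns X ?D" using assms(2) by (auto simp: pfuns_def)
  have s2: "paeq ?D p q" if h: "paeq D' p q" for p q
  proof -
    obtain C where C: "C \<in> D'" "C \<subseteq> fst p \<inter> fst q" "\<forall>x\<in>C. snd p x = snd q x"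
      using h unfolding paeq_def by blast
    have "C \<in> ?D" using C(1) assms(2) by blast
    then show ?thesis using C(2,3) unfolding paeq_def by blast
  qed
  have s2': "ple ?D p q" if h: "ple D' p q" for p q
  proof -
    obtain C where C: "C \<in> D'" "C \<subseteq> fst p \<inter> fst q" "\<forall>x\<in>C. snd p x \<le> snd q x"
      using h unfolding ple_def by blast
    have "C \<in> ?D" using C(1) assms(2) by blast
    then show ?thesis using C(2,3) unfolding ple_def by blast
  qed
  have csub: "r \<in> pclass X ?D q" if "r \<in> pclass X D' q" for r q
  proof -
    have h: "q \<in> pfuns X D'" "r \<in> pfuns X D'" "paeq D' q r" using that by (simp_all add: pclass_mem)
    have "q \<in> pfuns X ?D" "r \<in> pfuns X ?D" using h(1,2) s1 by blast+
    moreover have "paeq ?D q r" by (rule s2[OF h(3)])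
    ultimately show ?thesis by (simp add: pclass_mem)
  qed
  have s3: "iota_check X ?D (pclass X D' p) = pclass X ?D p" if p: "p \<in> pfuns X D'" for p
  proof
    show "iota_check X ?D (pclass X D' p) \<subseteq> pclass X ?D p"
    proof
      fix r assume "r \<in> iota_check X ?D (pclass X D' p)"
      then obtain q where q: "q \<in> pclass X D' p" "(q, r) \<in> paeq_rel X ?D"
        unfolding iota_check_def by blast
      have h1: "paeq ?D p q" using q(1) s2 by (simp add: pclass_mem)
      have h2: "paeq ?D q r" "r \<in> pfuns X ?D" using q(2) by (simp_all add: paeq_rel_def)
      have "paeq ?D p r" by (rule paeq_trans[OF iD h1 h2(1)])
      then show "r \<in> pclass X ?D p" using h2(2) p s1 by (auto simp: pclass_mem)
    qed
    show "pclass X ?D p \<subseteq> iota_check X ?D (pclass X D' p)"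
    proof
      fix r assume "r \<in> pclass X ?D p"
      then have "(p, r) \<in> paeq_rel X ?D" by (simp add: pclass_def)
      moreover have "p \<in> pclass X D' p" by (rule pclass_self[OF p])
      ultimately show "r \<in> iota_check X ?D (pclass X D' p)"
        unfolding iota_check_def by blast
    qed
  qed
  have car: "iota_check X ?D P \<in> carrier (Capprox X ?D)" if h: "P \<in> carrier (Capprox X D')" for P
  proof -
    obtain p where p: "p \<in> pfuns X D'" "P = pclass X D' p" using h unfolding carrier_Capprox by blast
    have "pclass X ?D p \<in> carrier (Capprox X ?D)" unfolding carrier_Capprox using s1 p(1) by blast
    then show ?thesis using s3[OF p(1)] p(2) by simp
  qed
  have hom: "iota_check X ?D \<in> ring_hom (Capprox X D') (Capprox X ?D)"
  proof (rule ring_hom_memI)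
    show "iota_check X ?D x \<in> carrier (Capprox X ?D)" if "x \<in> carrier (Capprox X D')" for x
      using car that .
    fix x y assume x: "x \<in> carrier (Capprox X D')" and y: "y \<in> carrier (Capprox X D')"
    obtain p where p: "p \<in> pfuns X D'" "x = pclass X D' p" using x unfolding carrier_Capprox by blast
    obtain q where q: "q \<in> pfuns X D'" "y = pclass X D' q" using y unfolding carrier_Capprox by blast
    have pD: "p \<in> pfuns X ?D" and qD: "q \<in> pfuns X ?D" using p q s1 by auto
    have "iota_check X ?D (x \<otimes>\<^bsub>Capprox X D'\<^esub> y) = iota_check X ?D (pclass X D' (pmult p q))"
      using cmult_class[OF iD' p(1) q(1)] p q by (simp add: Capprox_def)
    also have "\<dots> = pclass X ?D (pmult p q)" by (rule s3[OF pfuns_padd(2)[OF iD' p(1) q(1)]])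
    also have "\<dots> = cmult X ?D (pclass X ?D p) (pclass X ?D q)" by (rule cmult_class[OF iD pD qD, symmetric])
    also have "\<dots> = iota_check X ?D x \<otimes>\<^bsub>Capprox X ?D\<^esub> iota_check X ?D y"
      using s3 p q by (simp add: Capprox_def)
    finally show "iota_check X ?D (x \<otimes>\<^bsub>Capprox X D'\<^esub> y) = iota_check X ?D x \<otimes>\<^bsub>Capprox X ?D\<^esub> iota_check X ?D y" .
    have "iota_check X ?D (x \<oplus>\<^bsub>Capprox X D'\<^esub> y) = iota_check X ?D (pclass X D' (padd p q))"
      using cadd_class[OF iD' p(1) q(1)] p q by (simp add: Capprox_def)
    also have "\<dots> = pclass X ?D (padd p q)" by (rule s3[OF pfuns_padd(1)[OF iD' p(1) q(1)]])
    also have "\<dots> = cadd X ?D (pclass X ?D p) (pclass X ?D q)" by (rule cadd_class[OF iD pD qD, symmetric])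
    also have "\<dots> = iota_check X ?D x \<oplus>\<^bsub>Capprox X ?D\<^esub> iota_check X ?D y"
      using s3 p q by (simp add: Capprox_def)
    finally show "iota_check X ?D (x \<oplus>\<^bsub>Capprox X D'\<^esub> y) = iota_check X ?D x \<oplus>\<^bsub>Capprox X ?D\<^esub> iota_check X ?D y" .
  next
    show "iota_check X ?D \<one>\<^bsub>Capprox X D'\<^esub> = \<one>\<^bsub>Capprox X ?D\<^esub>"
      using s3[OF pconst_in[OF tD']] by (simp add: Capprox_def)
  qed
  have pos: "iota_check X ?D ` cpos X D' \<subseteq> cpos X ?D"
  proof
    fix Q assume "Q \<in> iota_check X ?D ` cpos X D'"
    then obtain P where P: "P \<in> cpos X D'" "Q = iota_check X ?D P" by blast
    have Pc: "P \<in> carrier (Capprox X D')" using P(1) by (simp add: cpos_def)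
    obtain p where p: "p \<in> pfuns X D'" "P = pclass X D' p" using Pc unfolding carrier_Capprox by blast
    obtain a b where ab: "a \<in> pclass X D' (pconst X 0)" "b \<in> P" "ple D' a b"
      using P(1) by (auto simp: cpos_def cle_def)
    have "a \<in> pclass X ?D (pconst X 0)" using csub ab(1) by blast
    moreover have "b \<in> Q"
    proof -
      have "Q = pclass X ?D p" using P(2) p s3 by simp
      moreover have "b \<in> pclass X ?D p" using csub ab(2) p(2) by blast
      ultimately show ?thesis by simp
    qed
    ultimately have "cle X ?D (pclass X ?D (pconst X 0)) Q" using s2' ab(3) unfolding cle_def by blast
    then show "Q \<in> cpos X ?D" using car[OF Pc] P(2) by (simp add: cpos_def)
  qed
  have emb: "P \<in> cpos X D'" if Pc: "P \<in> carrier (Capprox X D')" and Q: "iota_check X ?D P \<in> cpos X ?D" for P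
  proof -
    obtain p where p: "p \<in> pfuns X D'" "P = pclass X D' p" using Pc unfolding carrier_Capprox by blast
    obtain a b where ab: "a \<in> pclass X ?D (pconst X 0)" "b \<in> pclass X ?D p" "ple ?D a b"
      using Q s3[OF p(1)] p(2) by (auto simp: cpos_def cle_def)
    obtain C1 where C1: "C1 \<in> ?D" "C1 \<subseteq> fst (pconst X 0) \<inter> fst a" "\<forall>x\<in>C1. snd (pconst X 0) x = snd a x"
      using ab(1) unfolding pclass_mem paeq_def by blast
    obtain C2 where C2: "C2 \<in> ?D" "C2 \<subseteq> fst p \<inter> fst b" "\<forall>x\<in>C2. snd p x = snd b x"
      using ab(2) unfolding pclass_mem paeq_def by blast
    obtain C3 where C3: "C3 \<in> ?D" "C3 \<subseteq> fst a \<inter> fst b" "\<forall>x\<in>C3. snd a x \<le> snd b x"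
      using ab(3) unfolding ple_def by blast
    have CD: "C1 \<inter> C2 \<inter> C3 \<in> ?D" using C1(1) C2(1) C3(1) dense_Int by blast
    have CA: "C1 \<inter> C2 \<inter> C3 \<subseteq> fst p" using C2(2) by blast
    have Cn: "\<forall>x\<in>C1 \<inter> C2 \<inter> C3. 0 \<le> snd p x"
    proof
      fix x assume x: "x \<in> C1 \<inter> C2 \<inter> C3"
      have "x \<in> topspace X" using x C1(2) by (auto simp: pconst_def)
      then have "snd a x = 0" using x C1(3) by (auto simp: pconst_def)
      then show "0 \<le> snd p x" using x C2(3) C3(3) by force
    qed
    have oA: "openin X (fst p)" using oD' pfuns_fst[OF p(1)] by blast
    have nn: "\<forall>x\<in>fst p. 0 \<le> snd p x" by (rule nonneg_on_domain[OF p(1) oA CD CA Cn])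
    have "ple D' (pconst X 0) p"
      unfolding ple_def
    proof (rule bexI[of _ "fst p"])
      show "fst p \<subseteq> fst (pconst X 0) \<inter> fst p \<and> (\<forall>x\<in>fst p. snd (pconst X 0) x \<le> snd p x)"
        using nn openin_subset[OF oA] by (auto simp: pconst_def)
    qed (rule pfuns_fst[OF p(1)])
    moreover have "pconst X 0 \<in> pclass X D' (pconst X 0)" by (rule pclass_self[OF pconst_in[OF tD']])
    moreover have "p \<in> P" using p pclass_self by blast
    ultimately have "cle X D' (pclass X D' (pconst X 0)) P" unfolding cle_def by blast
    then show ?thesis using Pc by (simp add: cpos_def)
  qed
  have s2b: "\<forall>p\<in>pfuns X D'. \<forall>q\<in>pfuns X D'. paeq D' p q \<longrightarrow> paeq ?D p q" using s2 by blast
  have s3b: "\<forall>p\<in>pfuns X D'. iota_check X ?D (pclass X D' p) = pclass X ?D p" using s3 by blast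
  have embb: "\<forall>P\<in>carrier (Capprox X D'). iota_check X ?D P \<in> cpos X ?D \<longrightarrow> P \<in> cpos X D'"
    using emb by blast
  show ?thesis using s1 s2b s3b hom pos embb by (intro conjI)
qed

end
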